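(* There is an absolute constant $c>0$ such that the following holds. Consider sequences of integers $k=k(n)\ge1$, $d=d(n)$, $t=t(n)$ with $d\ge 2k$ and $(d+1)\mid t$, and for each $n$ an average-case $d$-runlength NAGT scheme with $t$ tests for $n$ items and $k$ defectives (with average error probability $o_n(1)$). Then for all sufficiently large $n$, $$t\ge c\,\frac{d\log(n/k)}{\log(d/k)}.$$
   Context: $\log$ denotes the base-2 logarithm. A binary $t\times n$ matrix $M$ is $d$-runlength constrained if in every column, any two $1$'s are separated by a run of at least $d$ zeros, i.e. $M_{ij}=M_{i'j}=1$ with $i<i'$ implies $i'-i\ge d+1$. For $x\in\{0,1\}^n$ the NAGT outcome is $M\odot x=\bigvee_{j:x_j=1}M_{\cdot j}$ (entrywise OR). An average-case $d$-runlength NAGT scheme is a random binary $t\times n$ matrix $\mathsf{M}$, every realization of which is $d$-runlength constrained, together with a deterministic decoder $\mathsf{Dec}$, such that $$\frac{1}{\binom nk}\sum_{x\in\{0,1\}^n:\,\mathsf{wgt}(x)=k}\mathbf P_{\mathsf M}\{\mathsf{Dec}(\mathsf M,\mathsf M\odot x)\ne x\}=o_n(1),$$ where $\mathsf{wgt}$ is Hamming weight. *)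

theory Defs
  imports "HOL-Probability.Probability"
begin

text \<open>A binary t x n matrix is a function M :: nat => nat => bool (M i j = entry in row i,
  column j), required to vanish outside rows 0..<t and columns 0..<n.\<close>

type_synonym bmatrix = "nat \<Rightarrow> nat \<Rightarrow> bool"
type_synonym bvec = "nat \<Rightarrow> bool"

definition is_bmatrix :: "nat \<Rightarrow> nat \<Rightarrow> bmatrix \<Rightarrow> bool" where
  "is_bmatrix t n M \<longleftrightarrow> (\<forall>i j. M i j \<longrightarrow> i < t \<and> j < n)"

definition runlength_constrained :: "nat \<Rightarrow> bmatrix \<Rightarrow> bool" where
  "runlength_constrained d M \<longleftrightarrow>
     (\<forall>i i' j. M i j \<and> M i' j \<and> i < i' \<longrightarrow> i' - i \<ge> d + 1)"

definition weight_vecs :: "nat \<Rightarrow> nat \<Rightarrow> bvec set" where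
  "weight_vecs n k = {x. (\<forall>j. x j \<longrightarrow> j < n) \<and> card {j. j < n \<and> x j} = k}"

definition nagt_outcome :: "nat \<Rightarrow> nat \<Rightarrow> bmatrix \<Rightarrow> bvec \<Rightarrow> bvec" where
  "nagt_outcome t n M x = (\<lambda>i. i < t \<and> (\<exists>j<n. x j \<and> M i j))"

definition avg_error ::
  "nat \<Rightarrow> nat \<Rightarrow> nat \<Rightarrow> bmatrix pmf \<Rightarrow> (bmatrix \<Rightarrow> bvec \<Rightarrow> bvec) \<Rightarrow> real" where
  "avg_error t n k Mp Dec =
     (1 / real (n choose k)) *
     (\<Sum>x\<in>weight_vecs n k. measure_pmf.prob Mp {M. Dec M (nagt_outcome t n M x) \<noteq> x})"

end

theory Submission
  imports Defs
begin



lemma prob_sum_ge: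
  fixes p :: "'a pmf" and W :: "'b set" and B :: real
  assumes fin: "finite W"
    and h: "\<And>M. M \<in> set_pmf p \<Longrightarrow> B \<le> real (card {x\<in>W. P M x})"
  shows "B \<le> (\<Sum>x\<in>W. measure_pmf.prob p {M. P M x})"
proof -
  have eq: "(\<Sum>x\<in>W. measure_pmf.prob p {M. P M x}) =
        measure_pmf.expectation p (\<lambda>M. \<Sum>x\<in>W. indicator {M. P M x} M)"
    by (subst Bochner_Integration.integral_sum) (auto intro!: measure_pmf.integrable_const_bound[where B=1] simp: indicator_def)
  have c: "(\<Sum>x\<in>W. indicator {M. P M x} M :: real) = real (card {x\<in>W. P M x})" for M
    using fin by (simp add: indicator_def sum.If_cases Int_def)
  have "B \<le> measure_pmf.expectation p (\<lambda>M. \<Sum>x\<in>W. indicator {M. P M x} M)"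
    unfolding c
    apply (rule measure_pmf.integral_ge_const)
     apply (rule measure_pmf.integrable_const_bound[where B="real (card W)"])
      apply (auto intro!: AE_pmfI h card_mono fin)
    done
  then show ?thesis using eq by simp
qed


lemma divsame: "(a::nat) < b \<Longrightarrow> a div D = b div D \<Longrightarrow> D > 0 \<Longrightarrow> b - a < D"
proof -
  assume h: "a < b" "a div D = b div D" "D > 0"
  have "a = D * (a div D) + a mod D" by simp
  moreover have "b = D * (a div D) + b mod D" using h(2) by simp
  moreover have "b mod D < D" using h by simp
  ultimately show ?thesis using h by linarith
qed

lemma col_card:
  assumes "is_bmatrix t n M" "runlength_constrained d M" "(d+1) dvd t"
  shows "card {i. M i j} \<le> t div (d+1)"
proof -
  let ?D = "d+1"
  have sub: "{i. M i j} \<subseteq> {..<t}" using assms(1) by (auto simp: is_bmatrix_def)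
  have inj: "inj_on (\<lambda>i. i div ?D) {i. M i j}"
  proof (rule inj_onI)
    fix a b assume a: "a \<in> {i. M i j}" and b: "b \<in> {i. M i j}" and e: "a div ?D = b div ?D"
    show "a = b"
    proof (rule ccontr)
      assume "a \<noteq> b"
      then consider "a < b" | "b < a" by linarith
      then show False
      proof cases
        case 1
        then have "b - a \<ge> ?D" using assms(2) a b unfolding runlength_constrained_def by blast
        moreover have "b - a < ?D" using divsame[OF 1 e] by simp
        ultimately show False by linarith
      next
        case 2
        then have "a - b \<ge> ?D" using assms(2) a b unfolding runlength_constrained_def by blast
        moreover have "a - b < ?D" using divsame[OF 2 e[symmetric]] by simp
        ultimately show False by linarith
      qed
    qed
  qed
  have img: "(\<lambda>i. i div ?D) ` {i. M i j} \<subseteq> {..< t div ?D}"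
  proof
    fix y assume "y \<in> (\<lambda>i. i div ?D) ` {i. M i j}"
    then obtain i where i: "i < t" "y = i div ?D" using sub by auto
    obtain w where t: "t = ?D * w" using assms(3) by blast
    have "i < w * ?D" using i t by (simp add: mult.commute)
    then have "i div ?D < w" by (rule less_mult_imp_div_less)
    moreover have "t div ?D = w" unfolding t by (rule nonzero_mult_div_cancel_left) simp
    ultimately show "y \<in> {..< t div ?D}" using i(2) by simp
  qed
  have "card {i. M i j} \<le> card {..< t div ?D}" by (rule card_inj_on_le[OF inj img]) simp
  then show ?thesis by simp
qed

lemma out_card:
  assumes "is_bmatrix t n M" "runlength_constrained d M" "(d+1) dvd t" "x \<in> weight_vecs n k"
  shows "card {i. nagt_outcome t n M x i} \<le> k * (t div (d+1))"
proof -
  let ?J = "{j. j < n \<and> x j}"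
  have J: "card ?J = k" "finite ?J" using assms(4) by (auto simp: weight_vecs_def)
  have sub: "{i. nagt_outcome t n M x i} \<subseteq> (\<Union>j\<in>?J. {i. M i j})"
    by (auto simp: nagt_outcome_def)
  have fin: "finite {i. M i j}" for j
  proof (rule finite_subset[of _ "{..<t}"])
    show "{i. M i j} \<subseteq> {..<t}" using assms(1) by (auto simp: is_bmatrix_def)
  qed simp
  have "card {i. nagt_outcome t n M x i} \<le> card (\<Union>j\<in>?J. {i. M i j})"
    by (rule card_mono) (use J fin sub in auto)
  also have "\<dots> \<le> (\<Sum>j\<in>?J. card {i. M i j})" by (rule card_UN_le) (use J in auto)
  also have "\<dots> \<le> (\<Sum>j\<in>?J. t div (d+1))" by (rule sum_mono) (use col_card assms in auto)
  also have "\<dots> = k * (t div (d+1))" using J by simp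
  finally show ?thesis .
qed

lemma card_outcomes:
  "finite {y::bvec. (\<forall>i. y i \<longrightarrow> i<t) \<and> card {i. y i} \<le> m} \<and>
   card {y::bvec. (\<forall>i. y i \<longrightarrow> i<t) \<and> card {i. y i} \<le> m} \<le> (\<Sum>i\<le>m. t choose i)"
proof -
  let ?Y = "{y::bvec. (\<forall>i. y i \<longrightarrow> i<t) \<and> card {i. y i} \<le> m}"
  let ?T = "\<Union>i\<le>m. {S. S \<subseteq> {..<t} \<and> card S = i}"
  have inj: "inj_on (\<lambda>y. {i. y i}) ?Y" by (rule inj_onI) auto
  have img: "(\<lambda>y. {i. y i}) ` ?Y \<subseteq> ?T" by auto
  have finT: "finite ?T" by auto
  have "card ?Y \<le> card ?T" using card_inj_on_le[OF inj img finT] .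
  also have "\<dots> \<le> (\<Sum>i\<le>m. card {S. S \<subseteq> {..<t} \<and> card S = i})" by (rule card_UN_le) auto
  also have "\<dots> = (\<Sum>i\<le>m. t choose i)" by (simp add: n_subsets)
  finally show ?thesis using finite_imageD[OF finite_subset[OF img finT] inj] by simp
qed

lemma card_weight_vecs: "finite (weight_vecs n k) \<and> card (weight_vecs n k) = n choose k"
proof -
  have bij: "bij_betw (\<lambda>x. {j. x j}) (weight_vecs n k) {S. S \<subseteq> {..<n} \<and> card S = k}"
  proof (rule bij_betw_imageI)
    show "inj_on (\<lambda>x. {j. x j}) (weight_vecs n k)" by (rule inj_onI) auto
    show "(\<lambda>x. {j. x j}) ` weight_vecs n k = {S. S \<subseteq> {..<n} \<and> card S = k}"
    proof
      show "(\<lambda>x. {j. x j}) ` weight_vecs n k \<subseteq> {S. S \<subseteq> {..<n} \<and> card S = k}"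
      proof
        fix S assume "S \<in> (\<lambda>x. {j. x j}) ` weight_vecs n k"
        then obtain x where x: "x \<in> weight_vecs n k" "S = {j. x j}" by auto
        have e: "{j. x j} = {j. j < n \<and> x j}" using x(1) by (auto simp: weight_vecs_def)
        show "S \<in> {S. S \<subseteq> {..<n} \<and> card S = k}" using x e by (auto simp: weight_vecs_def)
      qed
      show "{S. S \<subseteq> {..<n} \<and> card S = k} \<subseteq> (\<lambda>x. {j. x j}) ` weight_vecs n k"
      proof
        fix S assume S: "S \<in> {S. S \<subseteq> {..<n} \<and> card S = k}"
        have e: "{j. j < n \<and> j \<in> S} = S" using S by auto
        have "(\<lambda>j. j \<in> S) \<in> weight_vecs n k" using S e unfolding weight_vecs_def by auto
        then show "S \<in> (\<lambda>x. {j. x j}) ` weight_vecs n k" by force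
      qed
    qed
  qed
  have "finite {S. S \<subseteq> {..<n} \<and> card S = k}" by auto
  then show ?thesis using bij bij_betw_finite bij_betw_same_card n_subsets[of "{..<n}" k] by fastforce
qed



lemma binsum:
  fixes m t :: nat
  assumes "1 \<le> m" "m \<le> t"
  shows "real (\<Sum>i\<le>m. t choose i) \<le> exp (real m) * (real t / real m) ^ m"
proof -
  define q where "q = real m / real t"
  have q0: "0 < q" and q1: "q \<le> 1" using assms by (auto simp: q_def)
  have "q ^ m * real (\<Sum>i\<le>m. t choose i) = (\<Sum>i\<le>m. real (t choose i) * q ^ m)"
    by (simp add: sum_distrib_left mult.commute)
  also have "\<dots> \<le> (\<Sum>i\<le>m. real (t choose i) * q ^ i)"
    by (rule sum_mono) (use q0 q1 in \<open>auto intro!: mult_left_mono power_decreasing\<close>)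
  also have "\<dots> \<le> (\<Sum>i\<le>t. real (t choose i) * q ^ i)"
    by (rule sum_mono2) (use assms q0 in auto)
  also have "\<dots> = (q + 1) ^ t" by (simp add: binomial_ring mult.commute)
  also have "\<dots> \<le> exp q ^ t"
    by (rule power_mono) (use q0 in \<open>auto simp: add.commute intro: exp_ge_add_one_self\<close>)
  also have "\<dots> = exp (real m)" using assms by (simp add: q_def exp_of_nat_mult[symmetric])
  finally have "q ^ m * real (\<Sum>i\<le>m. t choose i) \<le> exp (real m)" .
  then have "real (\<Sum>i\<le>m. t choose i) \<le> exp (real m) / q ^ m"
    using q0 by (simp add: field_simps mult.commute)
  then show ?thesis by (simp add: q_def power_divide)
qed
lemma main_bound:
  fixes t n k d :: nat and Mp :: "bmatrix pmf" and Dec :: "bmatrix \<Rightarrow> bvec \<Rightarrow> bvec"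
  assumes k1: "k \<ge> 1" and dk: "d \<ge> 2 * k" and dv: "(d+1) dvd t"
    and supp: "\<forall>M\<in>set_pmf Mp. is_bmatrix t n M \<and> runlength_constrained d M"
    and err: "avg_error t n k Mp Dec < 1/4"
  shows "real t \<ge> (1/8) * real d * log 2 (real n / real k) / log 2 (real d / real k)"
proof -
  define r where "r = real d / real k"
  have r2: "r \<ge> 2" using k1 dk by (simp add: r_def field_simps)
  have lr: "log 2 r > 0" using r2 by simp
  show ?thesis
  proof (cases "k < n")
    case False
    then have "real n / real k \<le> 1" using k1 by simp
    then have "ln (real n / real k) \<le> 0"
      using k1 by (cases "n = 0") auto
    then have "log 2 (real n / real k) \<le> 0"
      by (simp add: log_def divide_nonpos_pos)
    then have "(1/8) * real d * log 2 (real n / real k) / log 2 (real d / real k) \<le> 0"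
      using lr unfolding r_def by (simp add: divide_nonpos_pos mult_nonneg_nonpos)
    then show ?thesis by linarith
  next
    case True
    define C where "C = n choose k"
    have nk: "(real n / real k) ^ k \<le> real C" unfolding C_def
      using binomial_ge_n_over_k_pow_k[of k n] True by simp
    have nk1: "real n / real k > 1" using True k1 by simp
    have "real n / real k \<le> (real n / real k) ^ k"
      using nk1 k1 by (metis less_eq_real_def one_le_power power_increasing power_one_right)
    then have C2: "C \<ge> 2" using nk nk1 by linarith
    define W where "W = weight_vecs n k"
    have finW: "finite W" and cardW: "card W = C"
      using card_weight_vecs unfolding W_def C_def by auto
    let ?out = "\<lambda>M x. nagt_outcome t n M x"
    obtain M where M: "M \<in> set_pmf Mp" and badM: "real (card {x\<in>W. Dec M (?out M x) \<noteq> x}) < real C / 4"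
    proof (rule ccontr)
      assume "\<not> thesis"
      then have h: "\<And>M. M \<in> set_pmf Mp \<Longrightarrow> real C / 4 \<le> real (card {x\<in>W. Dec M (?out M x) \<noteq> x})"
        using that by force
      have "real C / 4 \<le> (\<Sum>x\<in>W. measure_pmf.prob Mp {M. Dec M (?out M x) \<noteq> x})"
        by (rule prob_sum_ge[OF finW h])
      then have "avg_error t n k Mp Dec \<ge> 1/4"
        unfolding avg_error_def W_def[symmetric] C_def[symmetric] using C2
        by (simp add: field_simps)
      then show False using err by linarith
    qed
    define G where "G = {x\<in>W. Dec M (?out M x) = x}"
    have "card G + card {x\<in>W. Dec M (?out M x) \<noteq> x} = C"
    proof -
      have "G \<union> {x\<in>W. Dec M (?out M x) \<noteq> x} = W" "G \<inter> {x\<in>W. Dec M (?out M x) \<noteq> x} = {}"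
        unfolding G_def by auto
      then show ?thesis using finW cardW card_Un_disjoint[of G "{x\<in>W. Dec M (?out M x) \<noteq> x}"]
        unfolding G_def by (metis (no_types, lifting) finite_Un)
    qed
    then have cG: "real (card G) > 3 * real C / 4" using badM by linarith
    define w where "w = t div (d+1)"
    define m where "m = k * w"
    define Y where "Y = {y::bvec. (\<forall>i. y i \<longrightarrow> i<t) \<and> card {i. y i} \<le> m}"
    define N where "N = (\<Sum>i\<le>m. t choose i)"
    have finY: "finite Y" and cY: "card Y \<le> N" using card_outcomes[of t m] unfolding Y_def N_def by auto
    have Mb: "is_bmatrix t n M" "runlength_constrained d M" using supp M by auto
    have inj: "inj_on (?out M) G"
      by (rule inj_onI) (metis (mono_tags, lifting) G_def mem_Collect_eq)
    have img: "?out M ` G \<subseteq> Y"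
    proof
      fix y assume "y \<in> ?out M ` G"
      then obtain x where x: "x \<in> W" "y = ?out M x" unfolding G_def by auto
      have "card {i. y i} \<le> m" using out_card[OF Mb dv, of x k] x unfolding W_def m_def w_def by simp
      then show "y \<in> Y" unfolding Y_def x(2) by (auto simp: nagt_outcome_def)
    qed
    have GN: "card G \<le> N" using card_inj_on_le[OF inj img finY] cY by linarith
    obtain w' where tw: "t = (d+1) * w'" using dv by blast
    have ww: "w = w'" unfolding w_def tw by (rule nonzero_mult_div_cancel_left) simp
    have t0: "t > 0"
    proof (rule ccontr)
      assume "\<not> t > 0"
      then have "t = 0" by simp
      moreover have "(\<Sum>i\<le>m'. (0::nat) choose i) = 1" for m' by (induction m') auto
      ultimately have "N = 1" unfolding N_def by simp
      then show False using GN cG C2 by linarith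
    qed
    then have w1: "w \<ge> 1" using tw ww by (cases w') auto
    have m1: "m \<ge> 1" using w1 k1 unfolding m_def by simp
    have mt: "m \<le> t" unfolding m_def tw ww using dk by (intro mult_right_mono) auto
    have tm: "real t / real m = real (d+1) / real k"
      using w1 k1 unfolding m_def tw ww by (simp add: field_simps)
    have "real N \<le> exp (real m) * (real t / real m) ^ m"
      unfolding N_def by (rule binsum[OF m1 mt])
    also have "\<dots> = (exp 1 * (real (d+1) / real k)) ^ m"
    proof -
      have "exp (real m) = exp 1 ^ m" using exp_of_nat_mult[of m 1] by simp
      then show ?thesis by (simp only: tm power_mult_distrib)
    qed
    also have "\<dots> \<le> (r ^ 4) ^ m"
    proof (rule power_mono)
      have "real (d+1) / real k = r + 1 / real k" unfolding r_def using k1 by (simp add: field_simps)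
      also have "\<dots> \<le> r + 1" using k1 by simp
      finally have a: "real (d+1) / real k \<le> r + 1" .
      have "exp 1 * (real (d+1) / real k) \<le> 3 * (r + 1)"
        using exp_le a by (intro mult_mono) auto
      also have "\<dots> \<le> r ^ 4"
      proof -
        have "r ^ 4 = r * r * r * r" by (simp add: power4_eq_xxxx)
        moreover have "r * r * r * r \<ge> 8 * r"
        proof -
          have a: "r * r \<ge> 2 * 2" by (rule mult_mono) (use r2 in auto)
          have b: "r * r * r \<ge> (2 * 2) * 2" by (rule mult_mono[OF a r2]) (use r2 in auto)
          show ?thesis using mult_right_mono[OF b, of r] r2 by simp
        qed
        ultimately have e: "r ^ 4 \<ge> 8 * r" by simp
        have "3 * (r + 1) \<le> 8 * r" using r2 by (simp add: algebra_simps)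
        then show ?thesis using e by linarith
      qed
      finally show "exp 1 * (real (d+1) / real k) \<le> r ^ 4" .
    qed auto
    finally have Nr: "real N \<le> r ^ (4 * m)" by (simp add: power_mult)
    have "real C \<le> real N ^ 2"
    proof -
      have "real N > 3 * real C / 4" using GN cG by linarith
      then have "real N ^ 2 \<ge> (3 * real C / 4) ^ 2"
        using C2 by (intro power_mono) auto
      moreover have "(3 * real C / 4) ^ 2 \<ge> real C" using C2 by (simp add: power2_eq_square field_simps) 
      ultimately show ?thesis by linarith
    qed
    also have "\<dots> \<le> (r ^ (4*m)) ^ 2" by (rule power_mono[OF Nr]) auto
    also have "\<dots> = r ^ (4 * m * 2)" by (simp only: power_mult)
    also have "4 * m * 2 = 8 * k * w" unfolding m_def by simp
    finally have "(real n / real k) ^ k \<le> r ^ (8 * k * w)"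
      using nk by linarith
    then have "ln ((real n / real k) ^ k) \<le> ln (r ^ (8 * k * w))"
      using nk1 r2 by (subst ln_le_cancel_iff) auto
    then have "real k * ln (real n / real k) \<le> real (8 * k * w) * ln r"
      using nk1 r2 by (simp add: ln_realpow)
    then have L: "ln (real n / real k) \<le> 8 * real w * ln r"
      using k1 by (simp add: mult.assoc mult.left_commute)
    have lnr: "ln r > 0" using r2 by simp
    have "(1/8) * real d * log 2 (real n / real k) / log 2 (real d / real k)
          = real d * ln (real n / real k) / (8 * ln r)"
      unfolding r_def[symmetric] log_def by (simp add: field_simps)
    also have "\<dots> \<le> real d * (8 * real w * ln r) / (8 * ln r)"
      using L lnr by (intro divide_right_mono mult_left_mono) auto
    also have "\<dots> = real d * real w" using lnr by simp
    also have "\<dots> \<le> real t" unfolding tw ww by simp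
    finally show ?thesis .
  qed
qed



theorem theorem4:
  shows "\<exists>c::real > 0. \<forall>(k::nat \<Rightarrow> nat) (d::nat \<Rightarrow> nat) (t::nat \<Rightarrow> nat)
            (Mp::nat \<Rightarrow> bmatrix pmf) (Dec::nat \<Rightarrow> bmatrix \<Rightarrow> bvec \<Rightarrow> bvec).
     (\<forall>n. k n \<ge> 1 \<and> d n \<ge> 2 * k n \<and> (d n + 1) dvd t n) \<longrightarrow>
     (\<forall>n. \<forall>M\<in>set_pmf (Mp n). is_bmatrix (t n) n M \<and> runlength_constrained (d n) M) \<longrightarrow>
     (\<lambda>n. avg_error (t n) n (k n) (Mp n) (Dec n)) \<longlonglongrightarrow> 0 \<longrightarrow>
     (\<forall>\<^sub>F n in sequentially.
        real (t n) \<ge> c * real (d n) * log 2 (real n / real (k n)) / log 2 (real (d n) / real (k n)))"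
  proof (intro exI[of _ "1/8::real"] conjI allI impI)
  fix k d t :: "nat \<Rightarrow> nat" and Mp :: "nat \<Rightarrow> bmatrix pmf" and Dec :: "nat \<Rightarrow> bmatrix \<Rightarrow> bvec \<Rightarrow> bvec"
  assume A: "\<forall>n. k n \<ge> 1 \<and> d n \<ge> 2 * k n \<and> (d n + 1) dvd t n"
    and B: "\<forall>n. \<forall>M\<in>set_pmf (Mp n). is_bmatrix (t n) n M \<and> runlength_constrained (d n) M"
    and L: "(\<lambda>n. avg_error (t n) n (k n) (Mp n) (Dec n)) \<longlonglongrightarrow> 0"
  have "\<forall>\<^sub>F n in sequentially. avg_error (t n) n (k n) (Mp n) (Dec n) < 1/4"
    by (rule order_tendstoD(2)[OF L]) simp
  then show "\<forall>\<^sub>F n in sequentially.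
        real (t n) \<ge> (1/8) * real (d n) * log 2 (real n / real (k n)) / log 2 (real (d n) / real (k n))"
  proof (rule eventually_mono)
    fix n assume "avg_error (t n) n (k n) (Mp n) (Dec n) < 1/4"
    then show "real (t n) \<ge> (1/8) * real (d n) * log 2 (real n / real (k n)) / log 2 (real (d n) / real (k n))"
      using main_bound[of "k n" "d n" "t n" "Mp n" n "Dec n"] A B by blast
  qed
qed simp

end
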